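(* Let $m\ge1$ be an integer, let $\mathcal{T}$ be the $m\times m$ lower bidiagonal matrix with $1$ on the diagonal and $-1$ on the sub-diagonal, and let $\gamma\in[0,2]$ with $\gamma\ne1$. Put $A_\gamma=(1-\gamma)\mathcal{T}+\gamma I_m$. Then every eigenvalue $\sigma$ of $A_\gamma A_\gamma^\dagger$ can be written as $$\sigma=(1-\gamma)^2+2(1-\gamma)\cos\theta+1=\left(\frac{\sin\theta}{\sin m\theta}\right)^2$$ for some real $\theta\not\equiv0\pmod\pi$ satisfying $(1-\gamma)\sin m\theta+\sin(m+1)\theta=0$. *)

theory Defs
  imports Complex_Main "Jordan_Normal_Form.Schur_Decomposition"
begin

definition bidiagT :: "nat \<Rightarrow> complex mat" where
  "bidiagT m = mat m m (\<lambda>(i, j). if i = j then 1 else if i = j + 1 then -1 else 0)"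

definition A_gamma :: "nat \<Rightarrow> real \<Rightarrow> complex mat" where
  "A_gamma m \<gamma> = complex_of_real (1 - \<gamma>) \<cdot>\<^sub>m bidiagT m + complex_of_real \<gamma> \<cdot>\<^sub>m 1\<^sub>m m"

end

theory Submission imports Defs begin

lemma A_eq: "A_gamma m g = mat m m (\<lambda>(i,j). if i = j then 1 else if i = Suc j then - complex_of_real (1-g) else 0)"
  by (rule eq_matI) (auto simp: A_gamma_def bidiagT_def algebra_simps)

lemma adj_eq: "mat_adjoint (A_gamma m g) = mat m m (\<lambda>(i,j). if j = i then 1 else if j = Suc i then - complex_of_real (1-g) else 0)"
  unfolding A_eq mat_adjoint_def
  by (rule eq_matI) (auto simp: mat_of_rows_index)

lemma sum_two1:
  assumes "i < m"
  fixes g :: "nat \<Rightarrow> complex"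
  shows "(\<Sum>j\<in>{0..<m}. (if j = i then p else if j = Suc i then q else 0) * g j) = p * g i + (if Suc i < m then q * g (Suc i) else 0)"
proof -
  have "(\<Sum>j\<in>{0..<m}. (if j = i then p else if j = Suc i then q else 0) * g j)
     = (\<Sum>j\<in>{0..<m}. (if j = i then p * g j else 0) + (if j = Suc i then q * g j else 0))"
    by (rule sum.cong) auto
  also have "\<dots> = p * g i + (if Suc i < m then q * g (Suc i) else 0)"
    using assms by (simp add: sum.distrib)
  finally show ?thesis .
qed

lemma sum_two2:
  assumes "i < m"
  fixes g :: "nat \<Rightarrow> complex"
  shows "(\<Sum>j\<in>{0..<m}. (if i = j then p else if i = Suc j then q else 0) * g j) = p * g i + (if 0 < i then q * g (i - 1) else 0)"
proof -
  have "(\<Sum>j\<in>{0..<m}. (if i = j then p else if i = Suc j then q else 0) * g j)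
     = (\<Sum>j\<in>{0..<m}. (if j = i then p * g j else 0) + (if j = i - 1 \<and> 0 < i then q * g j else 0))"
    by (rule sum.cong) auto
  also have "\<dots> = p * g i + (if 0 < i then q * g (i - 1) else 0)"
    using assms by (simp add: sum.distrib)
  finally show ?thesis .
qed

lemma mvec: "A \<in> carrier_mat m m \<Longrightarrow> u \<in> carrier_vec m \<Longrightarrow> i < m \<Longrightarrow> (A *\<^sub>v u) $ i = (\<Sum>j\<in>{0..<m}. A $$ (i,j) * u $ j)"
  by (auto simp: scalar_prod_def)

lemma scalar_eqs:
  assumes "eigenvalue (A_gamma m g * mat_adjoint (A_gamma m g)) \<sigma>"
  defines "a \<equiv> complex_of_real (1-g)"
  obtains x :: "nat \<Rightarrow> complex" where "\<exists>i<m. x i \<noteq> 0" "\<And>i. i \<ge> m \<Longrightarrow> x i = 0"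
    "\<And>i. i < m \<Longrightarrow> (x i - a * x (Suc i)) - (if 0 < i then a * (x (i-1) - a * x i) else 0) = \<sigma> * x i"
proof -
  define A' where "A' = mat m m (\<lambda>(i,j). if i = j then 1 else if i = Suc j then - a else 0)"
  define B' where "B' = mat m m (\<lambda>(i,j). if j = i then 1 else if j = Suc i then - a else 0)"
  have AB: "A_gamma m g * mat_adjoint (A_gamma m g) = A' * B'"
    unfolding A'_def B'_def a_def adj_eq by (simp add: A_eq)
  let ?A = A' let ?B = B'
  have dA: "?A \<in> carrier_mat m m" "?B \<in> carrier_mat m m" unfolding A'_def B'_def by auto
  obtain v where v: "v \<in> carrier_vec m" "v \<noteq> 0\<^sub>v m" "(?A * ?B) *\<^sub>v v = \<sigma> \<cdot>\<^sub>v v"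
    using assms(1) dA unfolding AB eigenvalue_def eigenvector_def by auto
  define x where "x i = (if i < m then v $ i else 0)" for i
  have nz: "\<exists>i<m. x i \<noteq> 0"
  proof (rule ccontr)
    assume "\<not> ?thesis"
    hence "v = 0\<^sub>v m" using v(1) by (intro eq_vecI) (auto simp: x_def)
    thus False using v(2) by simp
  qed
  have Bv: "(?B *\<^sub>v v) $ i = x i - a * x (Suc i)" if "i < m" for i
  proof -
    have "(?B *\<^sub>v v) $ i = (\<Sum>j\<in>{0..<m}. (if j = i then 1 else if j = Suc i then - a else 0) * x j)"
      using that v(1) unfolding mvec[OF dA(2) v(1) that]
      by (intro sum.cong) (auto simp: B'_def x_def)
    also have "\<dots> = x i - a * x (Suc i)" using that by (simp add: sum_two1 x_def)
    finally show ?thesis .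
  qed
  have "(?A *\<^sub>v (?B *\<^sub>v v)) $ i = (x i - a * x (Suc i)) - (if 0 < i then a * (x (i-1) - a * x i) else 0)" if "i < m" for i
  proof -
    have "(?A *\<^sub>v (?B *\<^sub>v v)) $ i = (\<Sum>j\<in>{0..<m}. (if i = j then 1 else if i = Suc j then - a else 0) * (x j - a * x (Suc j)))"
      unfolding mvec[OF dA(1) mult_mat_vec_carrier[OF dA(2) v(1)] that]
      using that by (intro sum.cong) (auto simp: A'_def Bv)
    also have "\<dots> = (x i - a * x (Suc i)) - (if 0 < i then a * (x (i-1) - a * x i) else 0)"
      using that by (simp add: sum_two2)
    finally show ?thesis .
  qed
  moreover have "(?A *\<^sub>v (?B *\<^sub>v v)) = \<sigma> \<cdot>\<^sub>v v" using v dA by simp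
  ultimately have "(x i - a * x (Suc i)) - (if 0 < i then a * (x (i-1) - a * x i) else 0) = \<sigma> * x i" if "i < m" for i
    using that v(1) by (metis carrier_vecD index_smult_vec(1) x_def)
  moreover have "x i = 0" if "m \<le> i" for i using that by (simp add: x_def)
  ultimately show ?thesis using that nz by blast
qed

lemma sigma_real:
  fixes x :: "nat \<Rightarrow> complex" and a :: real
  assumes nz: "\<exists>i<m. x i \<noteq> 0" and z: "\<And>i. i \<ge> m \<Longrightarrow> x i = 0"
    and eq: "\<And>i. i < m \<Longrightarrow> (x i - a * x (Suc i)) - (if 0 < i then a * (x (i-1) - a * x i) else 0) = \<sigma> * x i"
  shows "\<sigma> = of_real (Re \<sigma>)"
proof -
  define y where "y i = x i - a * x (Suc i)" for i
  obtain n where mn: "m = Suc n" using nz by (cases m) auto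
  have "(\<Sum>i<m. cnj (x i) * (if 0 < i then a * y (i-1) else 0))
      = (\<Sum>i<n. cnj (x (Suc i)) * (a * y i))"
    unfolding mn sum.lessThan_Suc_shift by simp
  also have "\<dots> = (\<Sum>i<m. cnj (x (Suc i)) * (a * y i))"
    unfolding mn using z[of "Suc n"] mn by simp
  finally have s2: "(\<Sum>i<m. cnj (x i) * (if 0 < i then a * y (i-1) else 0))
      = (\<Sum>i<m. cnj (x (Suc i)) * (a * y i))" .
  have "\<sigma> * (\<Sum>i<m. cnj (x i) * x i) = (\<Sum>i<m. cnj (x i) * (\<sigma> * x i))"
    by (simp add: sum_distrib_left algebra_simps)
  also have "\<dots> = (\<Sum>i<m. cnj (x i) * y i - cnj (x i) * (if 0 < i then a * y (i-1) else 0))"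
    by (rule sum.cong) (auto simp: eq[symmetric] y_def algebra_simps)
  also have "\<dots> = (\<Sum>i<m. cnj (x i) * y i) - (\<Sum>i<m. cnj (x (Suc i)) * (a * y i))"
    by (simp add: sum_subtractf s2)
  also have "\<dots> = (\<Sum>i<m. cnj (y i) * y i)"
    by (simp add: sum_subtractf[symmetric] y_def algebra_simps)
  finally have E: "\<sigma> * (\<Sum>i<m. cnj (x i) * x i) = (\<Sum>i<m. cnj (y i) * y i)" .
  have N: "(\<Sum>i<m. cnj (z i) * z i) = of_real (\<Sum>i<m. (cmod (z i))^2)" for z :: "nat \<Rightarrow> complex"
    unfolding of_real_sum by (rule sum.cong) (simp_all only: complex_norm_square mult.commute)
  obtain i where i: "i < m" "x i \<noteq> 0" using nz by auto
  have pos: "(\<Sum>i<m. (cmod (x i))^2) > 0"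
    by (rule sum_pos2[of _ i]) (use i in auto)
  define Sx where "Sx = (\<Sum>i<m. (cmod (x i))^2)"
  define Sy where "Sy = (\<Sum>i<m. (cmod (y i))^2)"
  from E have E2: "\<sigma> * of_real Sx = of_real Sy" unfolding N Sx_def Sy_def .
  have "of_real Sx \<noteq> (0::complex)" using pos unfolding Sx_def of_real_eq_0_iff by linarith
  hence "\<sigma> = of_real Sy / of_real Sx" using E2 by (simp add: eq_divide_eq)
  hence "\<sigma> = of_real (Sy / Sx)" by simp
  thus ?thesis by (metis Re_complex_of_real)
qed

fun P :: "real \<Rightarrow> nat \<Rightarrow> real" where
  "P c 0 = 0" | "P c (Suc 0) = 1" | "P c (Suc (Suc k)) = 2 * c * P c (Suc k) - P c k"

lemma P_ge: "c \<ge> 1 \<Longrightarrow> P c k \<ge> 0 \<and> P c (Suc k) \<ge> P c k + 1"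
proof (induction k)
  case 0 then show ?case by simp
next
  case (Suc k)
  hence h: "P c k \<ge> 0" "P c (Suc k) \<ge> P c k + 1" by auto
  have "(2*c - 1) * P c (Suc k) \<ge> P c (Suc k)"
    using mult_right_mono[of 1 "2*c-1" "P c (Suc k)"] h Suc.prems by simp
  hence "2 * c * P c (Suc k) \<ge> 2 * P c (Suc k)" by (simp add: algebra_simps)
  moreover have "P c (Suc (Suc k)) = 2*c*P c (Suc k) - P c k" by simp
  ultimately show ?case using h by linarith
qed

lemma P_neg: "P (-c) k = (-1)^(Suc k) * P c k"
  by (induction c k rule: P.induct) (auto simp: algebra_simps)

lemma P_pos_ineq: "c \<ge> 1 \<Longrightarrow> \<bar>a\<bar> \<le> 1 \<Longrightarrow> a * P c m + P c (Suc m) \<ge> 1"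
proof -
  assume c: "c \<ge> 1" and a: "\<bar>a\<bar> \<le> 1"
  have h: "P c m \<ge> 0" "P c (Suc m) \<ge> P c m + 1" using P_ge[OF c, of m] by auto
  have "a * P c m \<ge> - P c m"
  proof -
    have "\<bar>a * P c m\<bar> \<le> P c m" using mult_right_mono[OF a h(1)] h(1) by (simp add: abs_mult)
    thus ?thesis by linarith
  qed
  thus ?thesis using h by linarith
qed

lemma P_nonroot:
  assumes "\<bar>c\<bar> \<ge> 1" "\<bar>a\<bar> \<le> 1"
  shows "a * P c m + P c (Suc m) \<noteq> 0"
proof (cases "c \<ge> 1")
  case True thus ?thesis using P_pos_ineq[OF True assms(2), of m] by linarith
next
  case False
  hence c: "-c \<ge> 1" using assms by linarith
  have "(-a) * P (-c) m + P (-c) (Suc m) \<ge> 1" using P_pos_ineq[OF c, of "-a" m] assms(2) by simp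
  moreover have "(-a) * P (-c) m + P (-c) (Suc m) = (-1)^m * (a * P c m + P c (Suc m))"
    unfolding P_neg by (simp add: algebra_simps)
  ultimately show ?thesis by auto
qed

lemma P_sin: "c = cos t \<Longrightarrow> P c k * sin t = sin (real k * t)"
proof (induction c k rule: P.induct)
  case (3 c k)
  have "sin (real (Suc (Suc k)) * t) = 2 * cos t * sin (real (Suc k) * t) - sin (real k * t)"
  proof -
    have "sin (real (Suc k) * t + t) + sin (real (Suc k) * t - t) = 2 * sin (real (Suc k) * t) * cos t"
      by (simp add: sin_add sin_diff)
    moreover have "real (Suc (Suc k)) * t = real (Suc k) * t + t" "real k * t = real (Suc k) * t - t"
      by (simp_all add: algebra_simps)
    ultimately show ?thesis by (simp add: algebra_simps)
  qed
  thus ?case using 3 by (simp add: algebra_simps)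
qed simp_all

lemma final_id:
  fixes a t u :: real
  assumes h: "a * sin u + sin (u + t) = 0" and st: "sin t \<noteq> 0"
  shows "sin u \<noteq> 0" "a\<^sup>2 + 2 * a * cos t + 1 = (sin t / sin u)\<^sup>2"
proof -
  have S1: "sin (u + t) = sin u * cos t + cos u * sin t" by (simp add: sin_add)
  show su: "sin u \<noteq> 0"
  proof
    assume "sin u = 0"
    hence "cos u * sin t = 0" using h S1 by simp
    hence "cos u = 0" using st by simp
    thus False using \<open>sin u = 0\<close> sin_cos_squared_add[of u] by simp
  qed
  have ha: "a * sin u = - (sin u * cos t + cos u * sin t)" using h S1 by linarith
  have "(a\<^sup>2 + 2 * a * cos t + 1) * (sin u)\<^sup>2 = (a * sin u)\<^sup>2 + 2 * cos t * (a * sin u) * sin u + (sin u)\<^sup>2"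
    by (simp add: algebra_simps power2_eq_square)
  also have "\<dots> = (cos u)\<^sup>2 * (sin t)\<^sup>2 + (sin u)\<^sup>2 * (1 - (cos t)\<^sup>2)"
    unfolding ha by (simp add: algebra_simps power2_eq_square)
  also have "\<dots> = (sin t)\<^sup>2"
  proof -
    have cs: "1 - (cos t)\<^sup>2 = (sin t)\<^sup>2" by (simp add: sin_squared_eq)
    have "(cos u)\<^sup>2 * (sin t)\<^sup>2 + (sin u)\<^sup>2 * (1 - (cos t)\<^sup>2) = (sin t)\<^sup>2 * ((sin u)\<^sup>2 + (cos u)\<^sup>2)"
      by (unfold cs) (simp only: distrib_left mult.commute add.commute)
    thus ?thesis by simp
  qed
  finally show "a\<^sup>2 + 2 * a * cos t + 1 = (sin t / sin u)\<^sup>2"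
    using su by (simp add: field_simps power2_eq_square)
qed

theorem mainTheorem9:
  fixes m :: nat and \<gamma> :: real and \<sigma> :: complex
  assumes "m \<ge> 1"
    and "0 \<le> \<gamma>" and "\<gamma> \<le> 2" and "\<gamma> \<noteq> 1"
    and "eigenvalue (A_gamma m \<gamma> * mat_adjoint (A_gamma m \<gamma>)) \<sigma>"
  shows "\<exists>\<theta>::real. sin \<theta> \<noteq> 0
           \<and> (1 - \<gamma>) * sin (real m * \<theta>) + sin (real (m + 1) * \<theta>) = 0
           \<and> \<sigma> = complex_of_real ((1 - \<gamma>)\<^sup>2 + 2 * (1 - \<gamma>) * cos \<theta> + 1)
           \<and> \<sigma> = complex_of_real ((sin \<theta> / sin (real m * \<theta>))\<^sup>2)"
proof -
  define a where "a = 1 - \<gamma>"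
  have a0: "a \<noteq> 0" and a1: "\<bar>a\<bar> \<le> 1" using assms(2-4) by (auto simp: a_def)
  obtain x :: "nat \<Rightarrow> complex" where nz: "\<exists>i<m. x i \<noteq> 0" and z: "\<And>i. i \<ge> m \<Longrightarrow> x i = 0"
    and eq: "\<And>i. i < m \<Longrightarrow> (x i - of_real a * x (Suc i)) - (if 0 < i then of_real a * (x (i-1) - of_real a * x i) else 0) = \<sigma> * x i"
    using scalar_eqs[OF assms(5)] unfolding a_def by blast
  define s where "s = Re \<sigma>"
  have ss: "\<sigma> = of_real s" unfolding s_def by (rule sigma_real[OF nz z eq])
  define c where "c = (s - 1 - a\<^sup>2) / (2 * a)"
  have sc: "s = 1 + a\<^sup>2 + 2 * a * c" using a0 unfolding c_def by (simp add: field_simps)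
  have rec: "x (Suc (Suc j)) = - x j - 2 * of_real c * x (Suc j)" if "Suc j < m" for j
  proof -
    have "(x (Suc j) - of_real a * x (Suc (Suc j))) - of_real a * (x j - of_real a * x (Suc j)) = of_real (1 + a\<^sup>2 + 2 * a * c) * x (Suc j)"
      using eq[OF that] ss sc by simp
    hence "of_real a * (x (Suc (Suc j)) + x j + 2 * of_real c * x (Suc j)) = 0"
      by (simp add: algebra_simps power2_eq_square)
    hence "x (Suc (Suc j)) + x j + 2 * of_real c * x (Suc j) = 0" using a0 by simp
    thus ?thesis by (simp add: algebra_simps eq_neg_iff_add_eq_0)
  qed
  define w where "w k = (-1)^k * x (m - k)" for k
  have wP: "k \<le> m \<Longrightarrow> w k = of_real (P c k) * w 1" for k
  proof (induction k rule: less_induct)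
    case (less k)
    show ?case
    proof (cases k)
      case 0 thus ?thesis using z[of m] by (simp add: w_def)
    next
      case (Suc k1)
      show ?thesis
      proof (cases k1)
        case 0 thus ?thesis using Suc by simp
      next
        case (Suc j)
        have kj: "k = Suc (Suc j)" using Suc \<open>k = Suc k1\<close> by simp
        define jj where "jj = m - Suc (Suc j)"
        have e1: "Suc (Suc jj) = m - j" "Suc jj = m - Suc j" "jj = m - k" "Suc jj < m" "Suc (m - Suc j) = m - j"
          using less.prems kj by (auto simp: jj_def)
        have IH1: "w (Suc j) = of_real (P c (Suc j)) * w 1" using less.IH[of "Suc j"] less.prems kj by simp
        have IH0: "w j = of_real (P c j) * w 1" using less.IH[of j] less.prems kj by simp
        have "w k = (-1)^j * x jj" by (simp add: w_def kj jj_def)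
        also have "\<dots> = (-1)^j * (- x (Suc (Suc jj)) - 2 * of_real c * x (Suc jj))"
          by (simp add: rec[OF e1(4)])
        also have "\<dots> = 2 * of_real c * w (Suc j) - w j"
          unfolding w_def e1(1,2) by (simp add: algebra_simps e1(5))
        also have "\<dots> = of_real (P c k) * w 1"
          unfolding IH1 IH0 kj by (simp add: algebra_simps)
        finally show ?thesis .
      qed
    qed
  qed
  have w1: "w 1 \<noteq> 0"
  proof
    assume h: "w 1 = 0"
    obtain i where i: "i < m" "x i \<noteq> 0" using nz by auto
    have "w (m - i) = 0" using wP[of "m - i"] h by simp
    moreover have "m - (m - i) = i" using i by simp
    ultimately show False using i by (simp add: w_def)
  qed
  obtain n where mn: "m = Suc n" using assms(1) by (cases m) auto
  have sq: "((-1::complex)^k) * (-1)^k = 1" for k by (induct k) auto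
  have x0: "x 0 = - ((-1)^n * (of_real (P c (Suc n)) * w 1))"
  proof -
    have "w m = (-1)^m * x 0" by (simp add: w_def)
    hence "(-1)^m * w m = x 0" by (simp add: mult.assoc[symmetric] sq)
    thus ?thesis using wP[of m] mn by simp
  qed
  have x1: "x 1 = (-1)^n * (of_real (P c n) * w 1)"
  proof -
    have "w n = (-1)^n * x 1" unfolding w_def mn by simp
    hence "(-1)^n * w n = x 1" by (simp add: mult.assoc[symmetric] sq)
    thus ?thesis using wP[of n] mn by simp
  qed
  have "x 0 - of_real a * x 1 = \<sigma> * x 0" using eq[of 0] mn by simp
  hence "(-1)^n * w 1 * (of_real (s - 1) * of_real (P c (Suc n)) - of_real a * of_real (P c n)) = 0"
    unfolding x0 x1 ss by (simp add: algebra_simps)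
  hence "of_real ((s - 1) * P c (Suc n) - a * P c n) = (0::complex)" using w1 by simp
  hence "(s - 1) * P c (Suc n) - a * P c n = 0" by (simp only: of_real_eq_0_iff)
  hence "a * (a * P c m + P c (Suc m)) = 0" unfolding mn sc by (simp add: algebra_simps power2_eq_square)
  hence root: "a * P c m + P c (Suc m) = 0" using a0 by simp
  have cl: "\<bar>c\<bar> < 1" using P_nonroot[of c a m] root a1 by linarith
  define \<theta> where "\<theta> = arccos c"
  have ct: "cos \<theta> = c" using cl by (simp add: \<theta>_def cos_arccos_abs)
  have st: "sin \<theta> \<noteq> 0"
  proof -
    have "sin \<theta> = sqrt (1 - c\<^sup>2)" using cl unfolding \<theta>_def by (simp add: sin_arccos_abs)
    moreover have "c\<^sup>2 < 1" using cl by (simp add: abs_square_less_1)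
    ultimately show ?thesis by simp
  qed
  have sm: "sin (real k * \<theta>) = P c k * sin \<theta>" for k using P_sin[OF ct[symmetric]] by simp
  have cond: "a * sin (real m * \<theta>) + sin (real m * \<theta> + \<theta>) = 0"
  proof -
    have "real m * \<theta> + \<theta> = real (Suc m) * \<theta>" by (simp add: algebra_simps)
    hence "a * sin (real m * \<theta>) + sin (real m * \<theta> + \<theta>) = a * (P c m * sin \<theta>) + P c (Suc m) * sin \<theta>"
      by (simp only: sm)
    hence "a * sin (real m * \<theta>) + sin (real m * \<theta> + \<theta>) = (a * P c m + P c (Suc m)) * sin \<theta>"
      by (simp add: algebra_simps)
    thus ?thesis using root by simp
  qed
  have fid: "a\<^sup>2 + 2 * a * cos \<theta> + 1 = (sin \<theta> / sin (real m * \<theta>))\<^sup>2"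
    using final_id(2)[OF cond st] .
  show ?thesis
  proof (intro exI conjI)
    show "sin \<theta> \<noteq> 0" by (rule st)
    show "(1 - \<gamma>) * sin (real m * \<theta>) + sin (real (m + 1) * \<theta>) = 0"
      using cond unfolding a_def by (simp add: algebra_simps)
    show "\<sigma> = complex_of_real ((1 - \<gamma>)\<^sup>2 + 2 * (1 - \<gamma>) * cos \<theta> + 1)"
      unfolding ss sc ct a_def by (simp add: algebra_simps)
    show "\<sigma> = complex_of_real ((sin \<theta> / sin (real m * \<theta>))\<^sup>2)"
      unfolding ss sc fid[symmetric] ct a_def by (simp add: algebra_simps)
  qed
qed

end
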